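(* Assume H1 and H3. Then for any $\kappa>0$, $\theta\in\Theta$, $\bar\gamma<2/L$, $\gamma\in(0,\bar\gamma]$ and $x\in\mathbb{R}^d$, $$\|\mathrm{prox}^{\gamma\kappa}_{U_\theta}(x)-\gamma\nabla V_\theta(\mathrm{prox}^{\gamma\kappa}_{U_\theta}(x))\|^2\le\|x\|^2+\gamma\big[3\bar\gamma\kappa^2M^2+2\kappa c+2\kappa(R_{U,2}+MR_{U,1})+(2/L-\bar\gamma)^{-1}R_{V,1}^2-2\kappa\eta\|x\|\big].$$
   Context: $\|\cdot\|$ Euclidean, $\Theta\subset\mathbb{R}^{d_\Theta}$ nonempty. $\mathrm{prox}^\lambda_U(x)=\arg\min_{\tilde x}\{U(\tilde x)+\|x-\tilde x\|^2/(2\lambda)\}$. H1: for every $\theta\in\Theta$ convex $V_\theta,\bar V_\theta,U_\theta,\bar U_\theta:\mathbb{R}^d\to[0,\infty)$ with (a) $e^{-V_\theta-U_\theta}$, $e^{-\bar V_\theta-\bar U_\theta}$ integrable with $\min(\inf_\theta\int e^{-V_\theta-U_\theta},\inf_\theta\int e^{-\bar V_\theta-\bar U_\theta})>0$; (b) $V_\theta,\bar V_\theta$ $C^1$ with $L$-Lipschitz gradients ($L$ independent of $\theta$), and for each $\theta$ minimizers of $V_\theta,\bar V_\theta$ with norm $\le R_{V,1}$ and minimum values of absolute value $\le R_{V,2}$; (c) $U_\theta,\bar U_\theta$ are $M$-Lipschitz, and for each $\theta$ there are $x^\sharp_\theta,\bar x^\sharp_\theta$ of norm $\le R_{U,1}$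 with $|U_\theta(x^\sharp_\theta)|,|\bar U_\theta(\bar x^\sharp_\theta)|\le R_{U,2}$. H3: there are $\eta>0,c\ge0$ with $\min(U_\theta(x),\bar U_\theta(x))\ge\eta\|x\|-c$ for all $\theta,x$. *)

theory Defs
  imports "HOL-Analysis.Analysis"
begin

text \<open>For convex Lipschitz U and lambda > 0 the minimiser exists and is unique
  (strongly convex continuous objective); we pick it by Hilbert choice.\<close>
definition prox :: "real \<Rightarrow> ('a::real_normed_vector \<Rightarrow> real) \<Rightarrow> 'a \<Rightarrow> 'a" where
  "prox lam U x = (SOME y. \<forall>z. U y + (norm (x - y))\<^sup>2 / (2 * lam) \<le> U z + (norm (x - z))\<^sup>2 / (2 * lam))"

end

theory Submission imports Defs begin

lemma line_deriv:
  fixes f :: "'a::real_inner \<Rightarrow> real"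
  assumes "\<And>y. (f has_derivative (\<lambda>h. g y \<bullet> h)) (at y)"
  shows "((\<lambda>t. f (a + t *\<^sub>R d)) has_real_derivative (g (a + t *\<^sub>R d) \<bullet> d)) (at t)"
proof -
  have 1: "((\<lambda>t. a + t *\<^sub>R d) has_derivative (\<lambda>h. h *\<^sub>R d)) (at t)"
    by (auto intro!: derivative_eq_intros)
  have "((\<lambda>t. f (a + t *\<^sub>R d)) has_derivative (\<lambda>h. g (a + t *\<^sub>R d) \<bullet> (h *\<^sub>R d))) (at t)"
    using has_derivative_compose[OF 1 assms] by (simp add: o_def)
  moreover have "(\<lambda>h. g (a + t *\<^sub>R d) \<bullet> (h *\<^sub>R d)) = (*) (g (a + t *\<^sub>R d) \<bullet> d)"
    by (auto simp: inner_scaleR_right mult.commute)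
  ultimately show ?thesis by (simp add: has_field_derivative_def)
qed

lemma tangent_ineq:
  fixes f :: "'a::real_inner \<Rightarrow> real"
  assumes cv: "convex_on UNIV f" and dv: "\<And>y. (f has_derivative (\<lambda>h. g y \<bullet> h)) (at y)"
  shows "f a + g a \<bullet> (w - a) \<le> f w"
proof -
  define \<phi> where "\<phi> = (\<lambda>t::real. f (a + t *\<^sub>R (w - a)))"
  have "convex_on UNIV \<phi>"
  proof (rule convex_onI)
    fix t x y :: real assume t: "t > 0" "t < 1"
    have "\<phi> ((1 - t) *\<^sub>R x + t *\<^sub>R y) = f ((1 - t) *\<^sub>R (a + x *\<^sub>R (w - a)) + t *\<^sub>R (a + y *\<^sub>R (w - a)))"
      unfolding \<phi>_def by (simp add: algebra_simps)
    also have "\<dots> \<le> (1 - t) * \<phi> x + t * \<phi> y"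
      unfolding \<phi>_def using t by (intro convex_onD[OF cv]) auto
    finally show "\<phi> ((1 - t) *\<^sub>R x + t *\<^sub>R y) \<le> (1 - t) * \<phi> x + t * \<phi> y" .
  qed auto
  moreover have "(\<phi> has_real_derivative (g a \<bullet> (w - a))) (at 0)"
    unfolding \<phi>_def using line_deriv[OF dv, of a "w - a" 0] by simp
  ultimately have "\<phi> 1 - \<phi> 0 \<ge> (g a \<bullet> (w - a)) * (1 - 0)"
    by (intro convex_on_imp_above_tangent[where A=UNIV]) auto
  then show ?thesis unfolding \<phi>_def by simp
qed

lemma descent:
  fixes f :: "'a::real_inner \<Rightarrow> real"
  assumes dv: "\<And>y. (f has_derivative (\<lambda>h. g y \<bullet> h)) (at y)"
    and lip: "L-lipschitz_on UNIV g"
  shows "f b \<le> f a + g a \<bullet> (b - a) + L / 2 * (norm (b - a))\<^sup>2"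
proof -
  define d where "d = b - a"
  define h where "h = (\<lambda>t::real. f (a + t *\<^sub>R d) - t * (g a \<bullet> d) - L / 2 * t\<^sup>2 * (norm d)\<^sup>2)"
  have "h 1 \<le> h 0"
  proof (rule DERIV_nonpos_imp_nonincreasing[of 0 1 h])
    fix t :: real assume t: "0 \<le> t" "t \<le> 1"
    have D: "(h has_real_derivative (g (a + t *\<^sub>R d) \<bullet> d - g a \<bullet> d - L * t * (norm d)\<^sup>2)) (at t)"
      unfolding h_def
      by (rule derivative_eq_intros line_deriv[OF dv] refl | simp)+
    have "g (a + t *\<^sub>R d) \<bullet> d - g a \<bullet> d = (g (a + t *\<^sub>R d) - g a) \<bullet> d" by (simp add: inner_diff_left)
    also have "\<dots> \<le> norm (g (a + t *\<^sub>R d) - g a) * norm d" by (rule norm_cauchy_schwarz)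
    also have "\<dots> \<le> (L * norm (t *\<^sub>R d)) * norm d"
      using lipschitz_onD[OF lip, of "a + t *\<^sub>R d" a] by (intro mult_right_mono) (auto simp: dist_norm)
    also have "\<dots> = L * t * (norm d)\<^sup>2" using t by (simp add: power2_eq_square)
    finally show "\<exists>y. (h has_real_derivative y) (at t) \<and> y \<le> 0" using D by auto
  qed auto
  then show ?thesis unfolding h_def d_def by (simp add: algebra_simps)
qed

lemma lower_bound3:
  fixes f :: "'a::real_inner \<Rightarrow> real"
  assumes cv: "convex_on UNIV f" and dv: "\<And>y. (f has_derivative (\<lambda>h. g y \<bullet> h)) (at y)"
    and lip: "L-lipschitz_on UNIV g" and L: "0 < L"
  shows "f a + g a \<bullet> (b - a) + (norm (g b - g a))\<^sup>2 / (2 * L) \<le> f b"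
proof -
  define v where "v = g b - g a"
  define w where "w = b - (1 / L) *\<^sub>R v"
  have 1: "f a + g a \<bullet> (w - a) \<le> f w" by (rule tangent_ineq[OF cv dv])
  have 2: "f w \<le> f b + g b \<bullet> (w - b) + L / 2 * (norm (w - b))\<^sup>2" by (rule descent[OF dv lip])
  have e1: "g a \<bullet> (w - a) = g a \<bullet> (b - a) + g a \<bullet> (w - b)" by (simp add: inner_diff_right)
  have e2: "g b \<bullet> (w - b) - g a \<bullet> (w - b) = - (norm v)\<^sup>2 / L"
  proof -
    have "g b \<bullet> (w - b) - g a \<bullet> (w - b) = v \<bullet> (w - b)" unfolding v_def by (simp add: inner_diff_left)
    also have "\<dots> = - (v \<bullet> v) / L" unfolding w_def by simp
    finally show ?thesis by (simp add: dot_square_norm)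
  qed
  have e3: "L / 2 * (norm (w - b))\<^sup>2 = (norm v)\<^sup>2 / (2 * L)"
    unfolding w_def using L by (simp add: power2_eq_square field_simps)
  have "(norm v)\<^sup>2 / (2 * L) = (norm v)\<^sup>2 / L - (norm v)\<^sup>2 / (2 * L)" using L by (simp add: field_simps)
  then show ?thesis using 1 2 e1 e2 e3 unfolding v_def[symmetric] by linarith
qed

lemma grad_zero_min:
  fixes f :: "'a::real_inner \<Rightarrow> real"
  assumes dv: "\<And>y. (f has_derivative (\<lambda>h. g y \<bullet> h)) (at y)"
    and lip: "L-lipschitz_on UNIV g" and L: "0 < L" and mn: "\<And>y. f xs \<le> f y"
  shows "g xs = 0"
proof -
  define w where "w = xs - (1 / L) *\<^sub>R g xs"
  have "f w \<le> f xs + g xs \<bullet> (w - xs) + L / 2 * (norm (w - xs))\<^sup>2" by (rule descent[OF dv lip])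
  also have "\<dots> = f xs - (norm (g xs))\<^sup>2 / (2 * L)"
  proof -
    have a: "g xs \<bullet> (w - xs) = - (norm (g xs))\<^sup>2 / L" unfolding w_def by (simp add: dot_square_norm)
    have b: "norm (w - xs) = norm (g xs) / L" unfolding w_def using L by simp
    show ?thesis unfolding a b using L by (simp add: power2_eq_square field_simps)
  qed
  finally have "(norm (g xs))\<^sup>2 / (2 * L) \<le> 0" using mn[of w] by linarith
  then have "(norm (g xs))\<^sup>2 \<le> 0" using L by (simp add: divide_le_0_iff)
  then show ?thesis by simp
qed

lemma cocoercive:
  fixes f :: "'a::real_inner \<Rightarrow> real"
  assumes cv: "convex_on UNIV f" and dv: "\<And>y. (f has_derivative (\<lambda>h. g y \<bullet> h)) (at y)"
    and lip: "L-lipschitz_on UNIV g" and L: "0 < L" and mn: "\<And>y. f xs \<le> f y"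
  shows "(norm (g p))\<^sup>2 / L \<le> g p \<bullet> (p - xs)"
proof -
  have z: "g xs = 0" by (rule grad_zero_min[OF dv lip L mn])
  have 1: "f p + g p \<bullet> (xs - p) + (norm (g xs - g p))\<^sup>2 / (2 * L) \<le> f xs" by (rule lower_bound3[OF cv dv lip L])
  have 2: "f xs + g xs \<bullet> (p - xs) + (norm (g p - g xs))\<^sup>2 / (2 * L) \<le> f p" by (rule lower_bound3[OF cv dv lip L])
  have "g p \<bullet> (xs - p) = - (g p \<bullet> (p - xs))" by (simp add: inner_diff_right)
  moreover have "(norm (g p))\<^sup>2 / L = (norm (g p))\<^sup>2 / (2 * L) + (norm (g p))\<^sup>2 / (2 * L)" by (simp add: field_simps)
  ultimately show ?thesis using 1 2 z by simp
qed

lemma small_t: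
  fixes A B C :: real
  assumes "\<And>t. 0 < t \<Longrightarrow> t \<le> 1 \<Longrightarrow> A \<le> B + t * C"
  shows "A \<le> B"
proof (rule ccontr)
  assume "\<not> A \<le> B"
  then have d: "A - B > 0" by simp
  define t where "t = min 1 ((A - B) / (2 * (\<bar>C\<bar> + 1)))"
  have t0: "0 < t" using d unfolding t_def by auto
  have t1: "t \<le> 1" unfolding t_def by auto
  have "t * C \<le> t * \<bar>C\<bar>" using t0 by (simp add: mult_left_mono)
  also have "\<dots> \<le> (A - B) / (2 * (\<bar>C\<bar> + 1)) * \<bar>C\<bar>" unfolding t_def by (intro mult_right_mono) auto
  also have "\<dots> < A - B"
  proof -
    have "0 < (A - B) * (\<bar>C\<bar> + 2)" using d by (intro mult_pos_pos) auto
    then show ?thesis using d by (simp add: field_simps algebra_simps)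
  qed
  finally show False using assms[OF t0 t1] by linarith
qed

lemma prox_exists:
  fixes U :: "'a::euclidean_space \<Rightarrow> real"
  assumes cU: "continuous_on UNIV U" and nn: "\<And>y. 0 \<le> U y" and lam: "0 < lam"
  shows "\<exists>y. \<forall>z. U y + (norm (x - y))\<^sup>2 / (2 * lam) \<le> U z + (norm (x - z))\<^sup>2 / (2 * lam)"
proof -
  define F where "F = (\<lambda>y. U y + (norm (x - y))\<^sup>2 / (2 * lam))"
  define r where "r = 2 * lam * U x + 1"
  have r1: "1 \<le> r" using nn[of x] lam unfolding r_def by simp
  have cF: "continuous_on (cball x r) F" unfolding F_def
    using lam by (intro continuous_intros continuous_on_subset[OF cU]) auto
  obtain y where y: "y \<in> cball x r" and ymin: "\<And>z. z \<in> cball x r \<Longrightarrow> F y \<le> F z"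
    using continuous_attains_inf[OF compact_cball _ cF] r1 by auto
  have "F y \<le> F z" for z
  proof (cases "z \<in> cball x r")
    case True then show ?thesis by (rule ymin)
  next
    case False
    then have "r < norm (x - z)" by (simp add: dist_norm)
    then have "r * r < norm (x - z) * norm (x - z)" using r1 by (intro mult_strict_mono) auto
    moreover have "r \<le> r * r" using r1 by (simp add: mult_le_cancel_left1)
    ultimately have "2 * lam * U x < (norm (x - z))\<^sup>2" unfolding r_def by (simp add: power2_eq_square)
    then have "U x < (norm (x - z))\<^sup>2 / (2 * lam)" using lam by (simp add: field_simps)
    then have "F x < F z" unfolding F_def using nn[of z] by simp
    moreover have "F y \<le> F x" using ymin[of x] r1 by simp
    ultimately show ?thesis by simp
  qed
  then show ?thesis unfolding F_def by blast
qed

lemma norm_sub_scale: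
  fixes a b :: "'a::real_inner"
  shows "(norm (a - t *\<^sub>R b))\<^sup>2 = (norm a)\<^sup>2 - 2 * t * (a \<bullet> b) + t\<^sup>2 * (norm b)\<^sup>2"
  unfolding power2_norm_eq_inner by (simp add: inner_diff_left inner_diff_right inner_commute power2_eq_square algebra_simps)

lemma prox_subgrad:
  fixes U :: "'a::real_inner \<Rightarrow> real"
  assumes cv: "convex_on UNIV U" and lam: "0 < lam"
    and mn: "\<And>z. U p + (norm (x - p))\<^sup>2 / (2 * lam) \<le> U z + (norm (x - z))\<^sup>2 / (2 * lam)"
  shows "U p + ((1 / lam) *\<^sub>R (x - p)) \<bullet> (y - p) \<le> U y"
proof -
  have "U p \<le> U y - ((1 / lam) *\<^sub>R (x - p)) \<bullet> (y - p) + t * ((norm (y - p))\<^sup>2 / (2 * lam))"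
    if t: "0 < t" "t \<le> 1" for t
  proof -
    define z where "z = (1 - t) *\<^sub>R p + t *\<^sub>R y"
    have cz: "U z \<le> (1 - t) * U p + t * U y" unfolding z_def using t by (intro convex_onD[OF cv]) auto
    have "x - z = (x - p) - t *\<^sub>R (y - p)" unfolding z_def by (simp add: algebra_simps)
    then have nz: "(norm (x - z))\<^sup>2 = (norm (x - p))\<^sup>2 - 2 * t * ((x - p) \<bullet> (y - p)) + t\<^sup>2 * (norm (y - p))\<^sup>2"
      by (simp only: norm_sub_scale)
    have "U p + (norm (x - p))\<^sup>2 / (2 * lam) \<le> (1 - t) * U p + t * U y + (norm (x - z))\<^sup>2 / (2 * lam)"
      using mn[of z] cz by linarith
    then have "t * U p \<le> t * U y - t * ((x - p) \<bullet> (y - p)) / lam + t\<^sup>2 * (norm (y - p))\<^sup>2 / (2 * lam)"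
      unfolding nz using lam by (simp add: field_simps)
    then have "t * U p \<le> t * (U y - ((x - p) \<bullet> (y - p)) / lam + t * ((norm (y - p))\<^sup>2 / (2 * lam)))"
      by (simp add: algebra_simps power2_eq_square)
    then have "U p \<le> U y - ((x - p) \<bullet> (y - p)) / lam + t * ((norm (y - p))\<^sup>2 / (2 * lam))"
      using t by simp
    then show ?thesis by simp
  qed
  then have "U p \<le> U y - ((1 / lam) *\<^sub>R (x - p)) \<bullet> (y - p)" by (rule small_t)
  then show ?thesis by simp
qed

theorem lemma14:
  fixes \<Theta> :: "'p::euclidean_space set"
    and V Vb U Ub :: "'p \<Rightarrow> 'a::euclidean_space \<Rightarrow> real"
    and gV gVb :: "'p \<Rightarrow> 'a \<Rightarrow> 'a"
    and L M RV1 RV2 RU1 RU2 \<eta> c :: real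
    and \<kappa> \<gamma> \<gamma>b :: real and \<theta> :: 'p and x :: 'a
  assumes Theta_ne: "\<Theta> \<noteq> {}"
    (* H1: convexity and nonnegativity *)
    and convex: "\<And>\<theta>. \<theta> \<in> \<Theta> \<Longrightarrow> convex_on UNIV (V \<theta>) \<and> convex_on UNIV (Vb \<theta>)
                              \<and> convex_on UNIV (U \<theta>) \<and> convex_on UNIV (Ub \<theta>)"
    and nonneg: "\<And>\<theta> y. \<theta> \<in> \<Theta> \<Longrightarrow> 0 \<le> V \<theta> y \<and> 0 \<le> Vb \<theta> y \<and> 0 \<le> U \<theta> y \<and> 0 \<le> Ub \<theta> y"
    (* H1 (a) *)
    and integrable: "\<And>\<theta>. \<theta> \<in> \<Theta> \<Longrightarrow>
        integrable lborel (\<lambda>y. exp (- V \<theta> y - U \<theta> y)) \<and>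
        integrable lborel (\<lambda>y. exp (- Vb \<theta> y - Ub \<theta> y))"
    and int_pos: "0 < min (INF \<theta>\<in>\<Theta>. LINT y|lborel. exp (- V \<theta> y - U \<theta> y))
                          (INF \<theta>\<in>\<Theta>. LINT y|lborel. exp (- Vb \<theta> y - Ub \<theta> y))"
    (* H1 (b) *)
    and L_pos: "0 < L"
    and gradV: "\<And>\<theta> y. \<theta> \<in> \<Theta> \<Longrightarrow> (V \<theta> has_derivative (\<lambda>h. gV \<theta> y \<bullet> h)) (at y)"
    and gradVb: "\<And>\<theta> y. \<theta> \<in> \<Theta> \<Longrightarrow> (Vb \<theta> has_derivative (\<lambda>h. gVb \<theta> y \<bullet> h)) (at y)"
    and gradV_lip: "\<And>\<theta>. \<theta> \<in> \<Theta> \<Longrightarrow> L-lipschitz_on UNIV (gV \<theta>) \<and> L-lipschitz_on UNIV (gVb \<theta>)"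
    and minV: "\<And>\<theta>. \<theta> \<in> \<Theta> \<Longrightarrow>
        \<exists>xs. norm xs \<le> RV1 \<and> (\<forall>y. V \<theta> xs \<le> V \<theta> y) \<and> \<bar>V \<theta> xs\<bar> \<le> RV2"
    and minVb: "\<And>\<theta>. \<theta> \<in> \<Theta> \<Longrightarrow>
        \<exists>xs. norm xs \<le> RV1 \<and> (\<forall>y. Vb \<theta> xs \<le> Vb \<theta> y) \<and> \<bar>Vb \<theta> xs\<bar> \<le> RV2"
    (* H1 (c) *)
    and U_lip: "\<And>\<theta>. \<theta> \<in> \<Theta> \<Longrightarrow> M-lipschitz_on UNIV (U \<theta>) \<and> M-lipschitz_on UNIV (Ub \<theta>)"
    and sharpU: "\<And>\<theta>. \<theta> \<in> \<Theta> \<Longrightarrow> \<exists>xs. norm xs \<le> RU1 \<and> \<bar>U \<theta> xs\<bar> \<le> RU2"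
    and sharpUb: "\<And>\<theta>. \<theta> \<in> \<Theta> \<Longrightarrow> \<exists>xs. norm xs \<le> RU1 \<and> \<bar>Ub \<theta> xs\<bar> \<le> RU2"
    (* H3 *)
    and eta_pos: "0 < \<eta>" and c_nonneg: "0 \<le> c"
    and H3: "\<And>\<theta> y. \<theta> \<in> \<Theta> \<Longrightarrow> min (U \<theta> y) (Ub \<theta> y) \<ge> \<eta> * norm y - c"
    (* parameters of the lemma *)
    and kappa_pos: "0 < \<kappa>" and theta_in: "\<theta> \<in> \<Theta>"
    and gb_lt: "\<gamma>b < 2 / L" and gamma_pos: "0 < \<gamma>" and gamma_le: "\<gamma> \<le> \<gamma>b"
  shows "(norm (prox (\<gamma> * \<kappa>) (U \<theta>) x - \<gamma> *\<^sub>R gV \<theta> (prox (\<gamma> * \<kappa>) (U \<theta>) x)))\<^sup>2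
         \<le> (norm x)\<^sup>2 + \<gamma> * (3 * \<gamma>b * \<kappa>\<^sup>2 * M\<^sup>2 + 2 * \<kappa> * c + 2 * \<kappa> * (RU2 + M * RU1)
              + inverse (2 / L - \<gamma>b) * RV1\<^sup>2 - 2 * \<kappa> * \<eta> * norm x)"
proof -
  define lam where "lam = \<gamma> * \<kappa>"
  have lam: "0 < lam" unfolding lam_def using gamma_pos kappa_pos by simp
  define Ut where "Ut = U \<theta>"
  have cvU: "convex_on UNIV Ut" using convex[OF theta_in] unfolding Ut_def by simp
  have lipU: "M-lipschitz_on UNIV Ut" using U_lip[OF theta_in] unfolding Ut_def by simp
  have M0: "0 \<le> M" by (rule lipschitz_on_nonneg[OF lipU])
  have nnU: "\<And>y. 0 \<le> Ut y" using nonneg[OF theta_in] unfolding Ut_def by simp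
  have cU: "continuous_on UNIV Ut" by (rule lipschitz_on_continuous_on[OF lipU])
  define p where "p = prox lam Ut x"
  have pmin: "\<And>z. Ut p + (norm (x - p))\<^sup>2 / (2 * lam) \<le> Ut z + (norm (x - z))\<^sup>2 / (2 * lam)"
    using someI_ex[OF prox_exists[OF cU nnU lam, of x]] unfolding p_def prox_def by blast
  define s where "s = (1 / lam) *\<^sub>R (x - p)"
  have sub: "\<And>y. Ut p + s \<bullet> (y - p) \<le> Ut y" unfolding s_def by (rule prox_subgrad[OF cvU lam pmin])
  have xp: "x - p = lam *\<^sub>R s" unfolding s_def using lam by simp
  have pxs: "p = x - lam *\<^sub>R s" using xp by (simp add: algebra_simps)
  have sM: "norm s \<le> M"
  proof -
    have "Ut p + s \<bullet> s \<le> Ut (p + s)" using sub[of "p + s"] by simp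
    moreover have "Ut (p + s) - Ut p \<le> M * norm s"
      using lipschitz_onD[OF lipU, of "p + s" p] by (simp add: dist_norm)
    ultimately have "norm s * norm s \<le> M * norm s" by (simp add: dot_square_norm power2_eq_square)
    then show ?thesis using M0 by (cases "norm s = 0") (auto simp: mult_le_cancel_right)
  qed
  have s0: "0 \<le> norm s" by simp
  have sM2: "(norm s)\<^sup>2 \<le> M\<^sup>2" using sM s0 by (intro power_mono) auto
  have Ux: "Ut x \<le> Ut p + lam * M\<^sup>2"
  proof -
    have "Ut x - Ut p \<le> M * norm (x - p)"
      using lipschitz_onD[OF lipU, of x p] by (simp add: dist_norm)
    also have "\<dots> = lam * (M * norm s)" unfolding xp using lam by simp
    also have "\<dots> \<le> lam * M\<^sup>2" using sM M0 lam by (simp add: power2_eq_square mult_left_mono)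
    finally show ?thesis by simp
  qed
  obtain xu where xu: "norm xu \<le> RU1" "\<bar>Ut xu\<bar> \<le> RU2" using sharpU[OF theta_in] unfolding Ut_def by blast
  have sxu: "\<bar>s \<bullet> xu\<bar> \<le> M * RU1"
  proof -
    have "\<bar>s \<bullet> xu\<bar> \<le> norm s * norm xu" by (rule Cauchy_Schwarz_ineq2)
    also have "\<dots> \<le> M * RU1" using sM xu(1) M0 by (intro mult_mono) auto
    finally show ?thesis .
  qed
  have sp: "Ut p - RU2 - M * RU1 \<le> s \<bullet> p"
    using sub[of xu] xu(2) sxu by (simp add: inner_diff_right)
  have sx: "s \<bullet> x = s \<bullet> p + lam * (norm s)\<^sup>2"
    using pxs by (simp add: inner_diff_right dot_square_norm)
  have H3x: "\<eta> * norm x - c \<le> Ut x" using H3[OF theta_in, of x] unfolding Ut_def by simp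
  have xs_lb: "\<eta> * norm x - c - lam * M\<^sup>2 - RU2 - M * RU1 \<le> x \<bullet> s"
    using sp sx Ux H3x lam by (simp add: inner_commute) (smt (verit) mult_nonneg_nonneg zero_le_power2)
  have Pn: "(norm p)\<^sup>2 = (norm x)\<^sup>2 - 2 * lam * (x \<bullet> s) + lam\<^sup>2 * (norm s)\<^sup>2"
    unfolding pxs by (rule norm_sub_scale)
  have P: "(norm p)\<^sup>2 \<le> (norm x)\<^sup>2 - 2 * lam * (\<eta> * norm x - c - lam * M\<^sup>2 - RU2 - M * RU1) + lam\<^sup>2 * M\<^sup>2"
  proof -
    have "2 * lam * (\<eta> * norm x - c - lam * M\<^sup>2 - RU2 - M * RU1) \<le> 2 * lam * (x \<bullet> s)"
      using xs_lb lam by simp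
    moreover have "lam\<^sup>2 * (norm s)\<^sup>2 \<le> lam\<^sup>2 * M\<^sup>2" using sM2 by (simp add: mult_left_mono)
    ultimately show ?thesis unfolding Pn by linarith
  qed
  have cvV: "convex_on UNIV (V \<theta>)" using convex[OF theta_in] by simp
  have dvV: "\<And>y. (V \<theta> has_derivative (\<lambda>h. gV \<theta> y \<bullet> h)) (at y)" using gradV[OF theta_in] .
  have lipV: "L-lipschitz_on UNIV (gV \<theta>)" using gradV_lip[OF theta_in] by simp
  obtain xv where xv: "norm xv \<le> RV1" "\<And>y. V \<theta> xv \<le> V \<theta> y" using minV[OF theta_in] by blast
  define G where "G = gV \<theta> p"
  have co: "(norm G)\<^sup>2 / L \<le> G \<bullet> (p - xv)" unfolding G_def by (rule cocoercive[OF cvV dvV lipV L_pos xv(2)])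
  have Gxv: "\<bar>G \<bullet> xv\<bar> \<le> norm G * RV1"
  proof -
    have "\<bar>G \<bullet> xv\<bar> \<le> norm G * norm xv" by (rule Cauchy_Schwarz_ineq2)
    also have "\<dots> \<le> norm G * RV1" using xv(1) by (intro mult_left_mono) auto
    finally show ?thesis .
  qed
  have pG: "(norm G)\<^sup>2 / L - norm G * RV1 \<le> p \<bullet> G"
    using co Gxv by (simp add: inner_diff_right inner_commute)
  have E: "(norm (p - \<gamma> *\<^sub>R G))\<^sup>2 = (norm p)\<^sup>2 - 2 * \<gamma> * (p \<bullet> G) + \<gamma>\<^sup>2 * (norm G)\<^sup>2"
    by (rule norm_sub_scale)
  define a where "a = 2 / L - \<gamma>b"
  have a0: "0 < a" unfolding a_def using gb_lt by simp
  have gg: "\<gamma>\<^sup>2 * (norm G)\<^sup>2 \<le> \<gamma> * \<gamma>b * (norm G)\<^sup>2"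
    using gamma_le gamma_pos by (simp add: power2_eq_square mult_right_mono)
  have quad: "- a * (norm G)\<^sup>2 + 2 * RV1 * norm G \<le> inverse a * RV1\<^sup>2"
  proof -
    have "0 \<le> (a * norm G - RV1)\<^sup>2" by simp
    then have "0 \<le> a * (a * (norm G)\<^sup>2) - a * (2 * RV1 * norm G) + RV1\<^sup>2" by (simp add: power2_eq_square algebra_simps)
    moreover have "a * (inverse a * RV1\<^sup>2) = RV1\<^sup>2" using a0 by simp
    moreover have "a * (- a * (norm G)\<^sup>2 + 2 * RV1 * norm G) = a * (a * (norm G)\<^sup>2) * (-1) + a * (2 * RV1 * norm G)"
      by (simp add: algebra_simps)
    ultimately have "a * (- a * (norm G)\<^sup>2 + 2 * RV1 * norm G) \<le> a * (inverse a * RV1\<^sup>2)"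
      by linarith
    then show ?thesis using a0 by (simp add: mult_le_cancel_left_pos)
  qed
  have grad_part: "- 2 * \<gamma> * (p \<bullet> G) + \<gamma>\<^sup>2 * (norm G)\<^sup>2 \<le> \<gamma> * (inverse a * RV1\<^sup>2)"
  proof -
    have "- 2 * \<gamma> * (p \<bullet> G) \<le> - 2 * \<gamma> * ((norm G)\<^sup>2 / L - norm G * RV1)"
      using pG gamma_pos by simp
    also have "\<dots> = \<gamma> * (- (2 / L) * (norm G)\<^sup>2 + 2 * RV1 * norm G)" by (simp add: algebra_simps)
    finally have "- 2 * \<gamma> * (p \<bullet> G) + \<gamma>\<^sup>2 * (norm G)\<^sup>2 \<le> \<gamma> * (- a * (norm G)\<^sup>2 + 2 * RV1 * norm G)"
      using gg unfolding a_def by (simp add: algebra_simps)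
    also have "\<dots> \<le> \<gamma> * (inverse a * RV1\<^sup>2)" using quad gamma_pos by (intro mult_left_mono) auto
    finally show ?thesis .
  qed
  have lamM: "lam\<^sup>2 * M\<^sup>2 + 2 * lam * (lam * M\<^sup>2) \<le> \<gamma> * (3 * \<gamma>b * \<kappa>\<^sup>2 * M\<^sup>2)"
  proof -
    have "lam\<^sup>2 * M\<^sup>2 + 2 * lam * (lam * M\<^sup>2) = \<gamma> * (3 * \<gamma> * \<kappa>\<^sup>2 * M\<^sup>2)"
      unfolding lam_def by (simp add: power2_eq_square algebra_simps)
    also have "\<dots> \<le> \<gamma> * (3 * \<gamma>b * \<kappa>\<^sup>2 * M\<^sup>2)"
      using gamma_le gamma_pos by (intro mult_left_mono mult_right_mono) auto
    finally show ?thesis .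
  qed
  have rest: "- 2 * lam * (\<eta> * norm x - c - RU2 - M * RU1) = \<gamma> * (2 * \<kappa> * c + 2 * \<kappa> * (RU2 + M * RU1) - 2 * \<kappa> * \<eta> * norm x)"
    unfolding lam_def by (simp add: algebra_simps)
  have "(norm (p - \<gamma> *\<^sub>R G))\<^sup>2 \<le> (norm x)\<^sup>2 + \<gamma> * (3 * \<gamma>b * \<kappa>\<^sup>2 * M\<^sup>2 + 2 * \<kappa> * c + 2 * \<kappa> * (RU2 + M * RU1)
              + inverse (2 / L - \<gamma>b) * RV1\<^sup>2 - 2 * \<kappa> * \<eta> * norm x)"
    using E P grad_part lamM rest unfolding a_def by (simp add: algebra_simps)
  then show ?thesis unfolding G_def p_def lam_def Ut_def .
qed

end
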